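(* For all integers $s\geq 2$ and $r\geq 1$, $$\sum_{i=1}^{s-2}2^{i-1}\binom{2r+i-1}{i}\sigma(s-i,2r+i)+2^{s-1}\sum_{j=0}^{2r-2}(-1)^j\binom{s+j-1}{j}\lambda(s+j)\lambda(2r-j)$$ $$-2^{s-2}\binom{s+2r-2}{s-1}\sum_{p\geq 1}\frac{H_p}{(2p+1)^{s+2r-1}}-2^{s-1}\binom{s+2r-2}{s-1}\lambda(s+2r-1)\ln 2=0,$$ where an empty sum equals $0$.
   Context: $H_p=1+\frac12+\cdots+\frac1p$. For integers $t\geq 1$, $n\geq 1$ let $S_n^{(t)}=\sum_{k=1}^{n}\frac{1}{(2k-1)^t}$, and for integers $s\geq 2$, $t\geq 1$ let $\sigma(s,t)=\sum_{n\geq 1}\frac{S_n^{(t)}}{n^s}$. For real $s>1$, $\lambda(s)=\sum_{n\geq 1}\frac{1}{(2n-1)^s}$. *)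

theory Defs
  imports "HOL-Analysis.Analysis"
begin

definition harmH :: "nat \<Rightarrow> real" where
  "harmH p = (\<Sum>k=1..p. 1 / real k)"

definition S_odd :: "nat \<Rightarrow> nat \<Rightarrow> real" where
  "S_odd t n = (\<Sum>k=1..n. 1 / (2 * real k - 1) ^ t)"

definition sigma :: "nat \<Rightarrow> nat \<Rightarrow> real" where
  "sigma s t = (\<Sum>n. S_odd t (n + 1) / real (n + 1) ^ s)"

definition dlambda :: "real \<Rightarrow> real" where
  "dlambda s = (\<Sum>n. 1 / (2 * real (n + 1) - 1) powr s)"

end

theory Submission
  imports Defs
begin


definition K :: "real \<Rightarrow> nat \<Rightarrow> nat \<Rightarrow> real \<Rightarrow> real \<Rightarrow> real" where
  "K c a s u z = (\<Sum>i<s. c^i * real ((a+i-1) choose i) * u^(a+i) * z^(s-i))"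

lemma K_step: "K c (Suc a) (Suc s) u z = u * (K c a (Suc s) u z + c * K c (Suc a) s u z)"
proof -
  have L: "K c (Suc a) (Suc s) u z = u^(Suc a) * z^(Suc s) +
     (\<Sum>i<s. c^(Suc i) * real (((a+i) choose i) + ((a+i) choose (Suc i))) * u^(a+i+2) * z^(s-i))"
    unfolding K_def by (subst sum.lessThan_Suc_shift) (simp add: Suc_diff_le)
  have R1: "K c a (Suc s) u z = u^a * z^(Suc s) +
     (\<Sum>i<s. c^(Suc i) * real ((a+i) choose (Suc i)) * u^(a+i+1) * z^(s-i))"
    unfolding K_def by (subst sum.lessThan_Suc_shift) (simp add: Suc_diff_le)
  have R2: "K c (Suc a) s u z = (\<Sum>i<s. c^i * real ((a+i) choose i) * u^(a+i+1) * z^(s-i))"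
    unfolding K_def by simp
  show ?thesis unfolding L R1 R2
    by (simp add: algebra_simps sum_distrib_left sum.distrib power_Suc)
qed

lemma pf:
  assumes rel: "u*(q-p) = p*q"
  shows "a+s \<ge> 1 \<Longrightarrow> q^a*p^s = (-1)^a * K 1 a s u p + K (-1) s a u q"
proof (induction "a+s" arbitrary: a s rule: less_induct)
  case less
  show ?case
  proof (cases "a = 0")
    case True
    then obtain s' where s: "s = Suc s'" using less.prems by (cases s) auto
    have "K 1 0 s u p = p^s" unfolding K_def s
      by (subst sum.lessThan_Suc_shift) (simp add: binomial_eq_0)
    then show ?thesis using True by (simp add: K_def)
  next
    case a: False
    show ?thesis
    proof (cases "s = 0")
      case True
      then obtain a' where s: "a = Suc a'" using a by (cases a) auto
      have "K (-1) 0 a u q = q^a" unfolding K_def s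
        by (subst sum.lessThan_Suc_shift) (simp add: binomial_eq_0)
      then show ?thesis using True by (simp add: K_def)
    next
      case False
      then obtain a' s' where as: "a = Suc a'" "s = Suc s'" using a by (cases a; cases s) auto
      have IH1: "q^(Suc a')*p^s' = (-1)^(Suc a') * K 1 (Suc a') s' u p + K (-1) s' (Suc a') u q"
        using less.hyps[of "Suc a'" s'] as by simp
      have IH2: "q^a'*p^(Suc s') = (-1)^a' * K 1 a' (Suc s') u p + K (-1) (Suc s') a' u q"
        using less.hyps[of a' "Suc s'"] as by simp
      have "q^a*p^s = q^a'*p^s'*(p*q)" using as by (simp add: algebra_simps)
      also have "\<dots> = u*(q^(Suc a')*p^s' - q^a'*p^(Suc s'))" unfolding rel[symmetric]
        by (simp add: algebra_simps)
      also have "\<dots> = (-1)^a * K 1 a s u p + K (-1) s a u q"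
        unfolding IH1 IH2 as K_step by (simp add: algebra_simps)
      finally show ?thesis .
    qed
  qed
qed



lemma pointwise:
  fixes y e :: real and a' s' :: nat
  assumes y: "y>0" and e: "e>0" and ev: "even a'"
  shows "1/(e^(a'+2)*(y+e)^(s'+2)) - 1/(y^(a'+2)*(y+e)^(s'+2)) =
   (\<Sum>i<s'. real ((a'+2+i) choose (i+1)) / (y^(a'+3+i)*(y+e)^(s'+1-i)))
 + (\<Sum>t<Suc a'. (-1)^t * real ((s'+1+t) choose t) / (y^(s'+2+t)*e^(a'+2-t)))
 - real ((s'+a'+2) choose (s'+1)) / (y^(s'+a'+2)*(y+e)*e)"
proof -
  define x where "x = y+e"
  have x: "x > 0" using y e by (simp add: x_def)
  have rel: "(1/y)*(1/e-1/x) = (1/x)*(1/e)" using y e x by (simp add: x_def field_simps)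
  have P: "(1/e)^(a'+2)*(1/x)^(s'+2) = (-1)^(a'+2) * K 1 (a'+2) (s'+2) (1/y) (1/x) + K (-1) (s'+2) (a'+2) (1/y) (1/e)"
    by (rule pf[OF rel]) simp
  have K1: "K 1 (a'+2) (s'+2) (1/y) (1/x) = 1/(y^(a'+2)*x^(s'+2))
      + (\<Sum>i<s'. real ((a'+2+i) choose (i+1)) / (y^(a'+3+i)*x^(s'+1-i)))
      + real ((s'+a'+2) choose (s'+1)) / (y^(s'+a'+2)*y*x)"
    unfolding K_def
    apply (simp only: add_2_eq_Suc' sum.lessThan_Suc[of _ "Suc s'"])
    apply (subst sum.lessThan_Suc_shift)
    apply (simp add: power_one_over Suc_diff_le algebra_simps del: binomial_Suc_Suc)
    apply (intro sum.cong refl) apply (simp add: power_add power3_eq_cube del: binomial_Suc_Suc)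
    done
  have bs: "Suc (Suc (a'+s')) choose Suc s' = Suc (Suc (a'+s')) choose Suc a'"
    using binomial_symmetric[of "Suc s'" "Suc (Suc (a'+s'))"] by simp
  have K2: "K (-1) (s'+2) (a'+2) (1/y) (1/e) = 
      (\<Sum>t<Suc a'. (-1)^t * real ((s'+1+t) choose t) / (y^(s'+2+t)*e^(a'+2-t)))
      - real ((s'+a'+2) choose (s'+1)) / (y^(s'+a'+2)*y*e)"
    unfolding K_def
    apply (simp only: add_2_eq_Suc' sum.lessThan_Suc[of _ "Suc a'"])
    using ev bs apply (simp add: power_one_over Suc_diff_le algebra_simps del: binomial_Suc_Suc)
    done
  have ev2: "(-1::real)^(a'+2) = 1" using ev by simp
  have L: "(1/e)^(a'+2)*(1/x)^(s'+2) = 1/(e^(a'+2)*x^(s'+2))" by (simp add: power_one_over)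
  have last: "real ((s'+a'+2) choose (s'+1)) / (y^(s'+a'+2)*y*x) - real ((s'+a'+2) choose (s'+1)) / (y^(s'+a'+2)*y*e)
     = - real ((s'+a'+2) choose (s'+1)) / (y^(s'+a'+2)*x*e)"
  proof -
    have gen: "\<And>c Y::real. Y > 0 \<Longrightarrow> c/(Y*y*x) - c/(Y*y*e) = - c/(Y*x*e)"
    proof -
      fix c Y :: real assume Y: "Y > 0"
      have "x \<noteq> 0" "y \<noteq> 0" "e \<noteq> 0" "Y \<noteq> 0" using x y e Y by auto
      then show "c/(Y*y*x) - c/(Y*y*e) = - c/(Y*x*e)"
        by (simp add: divide_simps) (simp add: x_def algebra_simps)
    qed
    show ?thesis by (rule gen) (use y in simp)
  qed
  have "1/(e^(a'+2)*x^(s'+2)) - 1/(y^(a'+2)*x^(s'+2)) = 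
     (\<Sum>i<s'. real ((a'+2+i) choose (i+1)) / (y^(a'+3+i)*x^(s'+1-i)))
    + (\<Sum>t<Suc a'. (-1)^t * real ((s'+1+t) choose t) / (y^(s'+2+t)*e^(a'+2-t)))
    + (real ((s'+a'+2) choose (s'+1)) / (y^(s'+a'+2)*y*x) - real ((s'+a'+2) choose (s'+1)) / (y^(s'+a'+2)*y*e))"
    using P unfolding L ev2 K1 K2 by simp
  note eq = this[unfolded last]
  show ?thesis unfolding x_def[symmetric] using eq by (simp only: diff_conv_add_uminus minus_divide_left)
qed


lemma tele_shift: "(\<lambda>m. 1/real (m+1) - 1/real (m+k+1)) sums harmH k"
proof -
  have a: "(\<lambda>m. \<Sum>j<k. (1/real (m+j+1) - 1/real (Suc m+j+1))) sums (\<Sum>j<k. 1/real (j+1))"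
  proof (rule sums_sum)
    fix j assume "j \<in> {..<k}"
    have "(\<lambda>n. 1/real (n+(j+1))) \<longlonglongrightarrow> 0"
      by (rule LIMSEQ_ignore_initial_segment[OF lim_1_over_n])
    then have "(\<lambda>n. 1/real (n+j+1)) \<longlonglongrightarrow> 0" by (simp add: add.assoc)
    from telescope_sums'[OF this] show "(\<lambda>m. 1/real (m+j+1) - 1/real (Suc m+j+1)) sums (1/real (j+1))"
      by simp
  qed
  have b: "(\<Sum>j<k. (1/real (m+j+1) - 1/real (Suc m+j+1))) = 1/real (m+1) - 1/real (m+k+1)" for m
    using sum_lessThan_telescope'[of "\<lambda>j. 1/real (m+j+1)" k] by (simp add: add.commute add.left_commute)
  have c: "(\<Sum>j<k. 1/real (j+1)) = harmH k"
    unfolding harmH_def by (simp add: sum.atLeast1_atMost_eq)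
  show ?thesis using a unfolding b c .
qed

lemma ln2_sums: "(\<lambda>m. 1/(2*real m+1) - 1/(2*real m+2)) sums ln 2"
proof -
  have "(\<lambda>n. sum (\<lambda>k. (-1)^k / real (Suc k)) {n*2..<n*2+2}) sums ln 2"
    by (rule sums_group[OF alternating_harmonic_series_sums]) simp
  moreover have "sum (\<lambda>k. (-1)^k / real (Suc k)) {n*2..<n*2+2} = 1/(2*real n+1) - 1/(2*real n+2)" for n
  proof -
    have "{n*2..<n*2+2} = {2*n, 2*n+1}" by auto
    then show ?thesis by (simp add: algebra_simps)
  qed
  ultimately show ?thesis by simp
qed

lemma inner_sums: "(\<lambda>m. 1/(((2*real k+1) + (2*real m+1)) * (2*real m+1))) sums ((ln 2 + harmH k/2)/(2*real k+1))"
proof -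
  have "(\<lambda>m. (1/(2*real m+1) - 1/(2*real m+2)) + (1/real (m+1) - 1/real (m+k+1))/2) sums (ln 2 + harmH k/2)"
    by (intro sums_add ln2_sums sums_divide tele_shift)
  then have "(\<lambda>m. ((1/(2*real m+1) - 1/(2*real m+2)) + (1/real (m+1) - 1/real (m+k+1))/2)/(2*real k+1)) sums ((ln 2 + harmH k/2)/(2*real k+1))"
    by (rule sums_divide)
  moreover have "((1/(2*real m+1) - 1/(2*real m+2)) + (1/real (m+1) - 1/real (m+k+1))/2)/(2*real k+1)
     = 1/(((2*real k+1) + (2*real m+1)) * (2*real m+1))" for m
  proof -
    have p: "2*real m+1 \<noteq> 0" "2*real m+2 \<noteq> 0" "real m+1 \<noteq> 0" "real m + real k+1 \<noteq> 0" "2*real k+1 \<noteq> 0"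
       "2*real k + 1 + (2*real m+1) \<noteq> 0"
      by (simp_all add: add_nonneg_eq_0_iff)
    show ?thesis using p by (simp add: divide_simps) (simp add: algebra_simps)
  qed
  ultimately show ?thesis by simp
qed



lemma summable_inv_Suc_pow: "c \<ge> 2 \<Longrightarrow> summable (\<lambda>n. 1/(real n+1)^c)"
proof -
  assume c: "c \<ge> 2"
  have "summable (\<lambda>n. inverse (real (Suc n) ^ c))"
    using inverse_power_summable[OF c, where 'a=real] by (subst summable_Suc_iff)
  then show ?thesis by (simp add: inverse_eq_divide add.commute)
qed

lemma hs_odd_pow: assumes c: "c \<ge> 2"
  shows "((\<lambda>m. 1/(2*real m+1)^c) has_sum dlambda (real c)) UNIV"
proof -
  have sm: "summable (\<lambda>m. 1/(2*real m+1)^c)"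
  proof (rule summable_comparison_test[OF _ summable_inv_Suc_pow[OF c]])
    show "\<exists>N. \<forall>n\<ge>N. norm (1/(2*real n+1)^c) \<le> 1/(real n+1)^c"
      by (intro exI[of _ 0] allI impI) (auto intro!: divide_left_mono power_mono mult_pos_pos)
  qed
  have eq: "(\<lambda>n. 1 / (2 * real (n + 1) - 1) powr real c) = (\<lambda>m. 1/(2*real m+1)^c)"
  proof
    fix n
    have "2 * real (n + 1) - 1 = 2*real n+1" by simp
    moreover have "(2*real n+1) powr real c = (2*real n+1)^c" by (rule powr_realpow) simp
    ultimately show "1 / (2 * real (n + 1) - 1) powr real c = 1/(2*real n+1)^c" by (simp add: add.commute)
  qed
  have "(\<lambda>m. 1/(2*real m+1)^c) sums dlambda (real c)"
    unfolding dlambda_def eq using sm by (simp add: summable_sums)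
  then show ?thesis by (rule sums_nonneg_imp_has_sum) simp
qed

lemma hs_inv_sq: "((\<lambda>m. 1/(real m+1)^2) has_sum (\<Sum>m. 1/(real m+1)^2)) UNIV"
  by (rule sums_nonneg_imp_has_sum) (auto intro: summable_sums summable_inv_Suc_pow)

lemma bound_summable: "((\<lambda>(k,m). 1/((real k+1)^2*(real m+1)^2)) summable_on UNIV)"
proof -
  let ?Z = "(\<Sum>m. 1/(real m+1)^2)"
  have "((\<lambda>(k,m). 1/((real k+1)^2*(real m+1)^2)) summable_on Sigma UNIV (\<lambda>_. UNIV))"
  proof (rule summable_on_SigmaI)
    fix k :: nat
    show "((\<lambda>m. (\<lambda>(k,m). 1/((real k+1)^2*(real m+1)^2)) (k,m)) has_sum (1/(real k+1)^2 * ?Z)) UNIV"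
      using has_sum_cmult_right[OF hs_inv_sq, of "1/(real k+1)^2"] by simp
  next
    show "(\<lambda>k. 1/(real k+1)^2 * ?Z) summable_on UNIV"
      using has_sum_cmult_left[OF hs_inv_sq, of ?Z] by (auto simp: summable_on_def)
  qed auto
  then show ?thesis by simp
qed

lemma pair_summable:
  fixes f :: "nat \<times> nat \<Rightarrow> real"
  assumes "\<And>k m. 0 \<le> f (k,m)" "\<And>k m. f (k,m) \<le> 1/((real k+1)^2*(real m+1)^2)"
  shows "f summable_on UNIV"
  by (rule summable_on_comparison_test[OF bound_summable]) (use assms in auto)



lemma hs_U: assumes b: "b \<ge> 2" and c: "c \<ge> 2"
  shows "((\<lambda>(k,m). 1/((2*real k+1)^b*(2*real m+1)^c)) has_sum (dlambda (real b) * dlambda (real c))) UNIV"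
proof -
  have "((\<lambda>(k,m). 1/((2*real k+1)^b*(2*real m+1)^c)) has_sum (dlambda (real b) * dlambda (real c))) (Sigma UNIV (\<lambda>_. UNIV))"
  proof (rule has_sum_SigmaI)
    fix k :: nat
    show "((\<lambda>m. (\<lambda>(k,m). 1/((2*real k+1)^b*(2*real m+1)^c)) (k,m)) has_sum (1/(2*real k+1)^b * dlambda (real c))) UNIV"
      using has_sum_cmult_right[OF hs_odd_pow[OF c], of "1/(2*real k+1)^b"] by simp
  next
    show "((\<lambda>k. 1/(2*real k+1)^b * dlambda (real c)) has_sum (dlambda (real b) * dlambda (real c))) UNIV"
      by (rule has_sum_cmult_left[OF hs_odd_pow[OF b]])
  next
    show "(\<lambda>(k,m). 1/((2*real k+1)^b*(2*real m+1)^c)) summable_on Sigma UNIV (\<lambda>_. UNIV)"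
      unfolding UNIV_Times_UNIV
    proof (rule pair_summable)
      fix k m :: nat
      have "(real k+1)^2 * (real m+1)^2 \<le> (2*real k+1)^b*(2*real m+1)^c"
      proof (rule mult_mono)
        have "(real k+1)^2 \<le> (2*real k+1)^2" by (rule power_mono) auto
        also have "\<dots> \<le> (2*real k+1)^b" by (rule power_increasing[OF b]) auto
        finally show "(real k+1)^2 \<le> (2*real k+1)^b" .
        have "(real m+1)^2 \<le> (2*real m+1)^2" by (rule power_mono) auto
        also have "\<dots> \<le> (2*real m+1)^c" by (rule power_increasing[OF c]) auto
        finally show "(real m+1)^2 \<le> (2*real m+1)^c" .
      qed auto
      then show "(case (k, m) of (k, m) \<Rightarrow> 1 / ((2 * real k + 1) ^ b * (2 * real m + 1) ^ c))
         \<le> 1 / ((real k + 1)\<^sup>2 * (real m + 1)\<^sup>2)"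
        by (auto intro!: divide_left_mono mult_pos_pos)
    qed simp
  qed
  then show ?thesis by simp
qed

lemma S_odd_alt: "S_odd b (n+1) = (\<Sum>k\<le>n. 1/(2*real k+1)^b)"
proof -
  have "{1..n+1} = {Suc 0..Suc n}" by simp
  then have "S_odd b (n+1) = (\<Sum>k=0..n. 1 / (2 * real (Suc k) - 1) ^ b)"
    unfolding S_odd_def by (simp only: sum.shift_bounds_cl_Suc_ivl)
  then show ?thesis by (simp add: atLeast0AtMost add.commute)
qed

lemma hs_T: assumes b: "b \<ge> 2" and c: "c \<ge> 2"
  shows "((\<lambda>(k,m). 1/((2*real k+1)^b*((2*real k+1)+(2*real m+1))^c)) has_sum (sigma c b / 2^c)) UNIV"
proof -
  define f where "f = (\<lambda>(k,m). 1/((2*real k+1)^b*((2*real k+1)+(2*real m+1))^c))"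
  have fs: "f summable_on UNIV"
    unfolding f_def
  proof (rule pair_summable)
    fix k m :: nat
    have "(real k+1)^2 * (real m+1)^2 \<le> (2*real k+1)^b*((2*real k+1)+(2*real m+1))^c"
    proof (rule mult_mono)
      have "(real k+1)^2 \<le> (2*real k+1)^2" by (rule power_mono) auto
      also have "\<dots> \<le> (2*real k+1)^b" by (rule power_increasing[OF b]) auto
      finally show "(real k+1)^2 \<le> (2*real k+1)^b" .
      have "(real m+1)^2 \<le> ((2*real k+1)+(2*real m+1))^2" by (rule power_mono) auto
      also have "\<dots> \<le> ((2*real k+1)+(2*real m+1))^c" by (rule power_increasing[OF c]) auto
      finally show "(real m+1)^2 \<le> ((2*real k+1)+(2*real m+1))^c" .
    qed auto
    then show "(case (k, m) of (k, m) \<Rightarrow> 1/((2*real k+1)^b*((2*real k+1)+(2*real m+1))^c))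
       \<le> 1 / ((real k + 1)\<^sup>2 * (real m + 1)\<^sup>2)"
      by (auto intro!: divide_left_mono mult_pos_pos)
  qed simp
  define V where "V = infsum f UNIV"
  have fV: "(f has_sum V) UNIV" using fs unfolding V_def by (rule has_sum_infsum)
  define h where "h = (\<lambda>(n::nat,k::nat). 1/((2*real k+1)^b*(2*real n+2)^c))"
  have "(f has_sum V) UNIV = (h has_sum V) (Sigma UNIV (\<lambda>n. {..n}))"
    by (rule has_sum_reindex_bij_witness[where j="\<lambda>(k,m). (k+m,k)" and i="\<lambda>(n,k). (k,n-k)"])
       (auto simp: f_def h_def algebra_simps)
  with fV have hV: "(h has_sum V) (Sigma UNIV (\<lambda>n. {..n}))" by simp
  have "((\<lambda>n. \<Sum>k\<le>n. h (n,k)) has_sum V) UNIV"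
    by (rule has_sum_SigmaD[OF hV]) simp
  then have sV: "(\<lambda>n. \<Sum>k\<le>n. h (n,k)) sums V" by (rule has_sum_imp_sums)
  have eqn: "(\<Sum>k\<le>n. h (n,k)) = S_odd b (n+1) / real (n+1)^c / 2^c" for n
  proof -
    have "(2*real n+2)^c = 2^c * real (n+1)^c" by (simp add: power_mult_distrib[symmetric] algebra_simps)
    then show ?thesis unfolding S_odd_alt h_def by (simp add: sum_divide_distrib mult_ac)
  qed
  have "(\<lambda>n. 2^c * (S_odd b (n+1) / real (n+1)^c / 2^c)) sums (2^c * V)"
    using sums_mult[OF sV[unfolded eqn], of "2^c"] .
  then have "(\<lambda>n. S_odd b (n+1) / real (n+1)^c) sums (2^c * V)" by simp
  then have "sigma c b = 2^c * V" unfolding sigma_def by (rule sums_unique[symmetric])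
  then have "V = sigma c b / 2^c" by simp
  then show ?thesis using fV unfolding f_def by simp
qed

lemma harmH_nonneg: "harmH k \<ge> 0" unfolding harmH_def by (intro sum_nonneg) auto

lemma harmH_le: "harmH k \<le> real k"
proof -
  have "harmH k \<le> (\<Sum>i=1..k. 1)" unfolding harmH_def by (intro sum_mono) auto
  then show ?thesis by simp
qed

lemma hs_W: assumes N: "N \<ge> 2"
  shows "((\<lambda>(k,m). 1/((2*real k+1)^N*((2*real k+1)+(2*real m+1))*(2*real m+1))) has_sum
     (ln 2 * dlambda (real (N+1)) + (\<Sum>p. harmH (p+1)/(2*real (p+1)+1)^(N+1))/2)) UNIV"
proof -
  define Ts where "Ts = (\<Sum>p. harmH (p+1)/(2*real (p+1)+1)^(N+1))"
  have N1: "N+1 \<ge> 2" using N by simp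
  have sN: "summable (\<lambda>k. 1/(2*real k+1)^N)"
    using hs_odd_pow[OF N] has_sum_imp_sums sums_summable by blast
  have sH: "summable (\<lambda>k. harmH k/(2*real k+1)^(N+1))"
  proof (rule summable_comparison_test[OF _ sN])
    show "\<exists>M. \<forall>n\<ge>M. norm (harmH n/(2*real n+1)^(N+1)) \<le> 1/(2*real n+1)^N"
    proof (intro exI[of _ 0] allI impI)
      fix n :: nat
      have "harmH n \<le> 2*real n+1" using harmH_le[of n] by simp
      then have "harmH n/(2*real n+1)^(N+1) \<le> (2*real n+1)/(2*real n+1)^(N+1)"
        by (intro divide_right_mono) auto
      also have "\<dots> = 1/(2*real n+1)^N"
      proof -
        have p: "(2*real n+1) \<noteq> 0" by (simp add: add_nonneg_eq_0_iff)
        have "(2*real n+1)^(N+1) = (2*real n+1)^N * (2*real n+1)" by (simp only: power_add power_one_right)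
        then show ?thesis using p by simp
      qed
      finally show "norm (harmH n/(2*real n+1)^(N+1)) \<le> 1/(2*real n+1)^N"
        using harmH_nonneg[of n] by simp
    qed
  qed
  have HT: "(\<lambda>k. harmH k/(2*real k+1)^(N+1)) sums Ts"
  proof -
    have "(\<lambda>p. harmH (Suc p)/(2*real (Suc p)+1)^(N+1)) sums Ts"
    proof -
      have "summable (\<lambda>p. harmH (Suc p)/(2*real (Suc p)+1)^(N+1))"
        using summable_Suc_iff[THEN iffD2, OF sH] .
      then show ?thesis unfolding Ts_def by (simp add: summable_sums)
    qed
    then show ?thesis by (subst (asm) sums_Suc_iff) (simp add: harmH_def)
  qed
  have LT: "(\<lambda>k. 1/(2*real k+1)^(N+1)) sums dlambda (real (N+1))"
    using hs_odd_pow[OF N1] has_sum_imp_sums by blast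
  have G: "(\<lambda>k. 1/(2*real k+1)^N * ((ln 2 + harmH k/2)/(2*real k+1))) sums (ln 2 * dlambda (real (N+1)) + Ts/2)"
  proof -
    have "(\<lambda>k. ln 2 * (1/(2*real k+1)^(N+1)) + (harmH k/(2*real k+1)^(N+1))/2) sums (ln 2 * dlambda (real (N+1)) + Ts/2)"
      by (intro sums_add sums_mult sums_divide LT HT)
    moreover have "ln 2 * (1/(2*real k+1)^(N+1)) + (harmH k/(2*real k+1)^(N+1))/2 = 1/(2*real k+1)^N * ((ln 2 + harmH k/2)/(2*real k+1))" for k
    proof -
      have x: "2*real k+1 \<noteq> 0" "(2*real k+1)^N \<noteq> 0" by (simp_all add: add_nonneg_eq_0_iff)
      have "(2*real k+1)^(N+1) = (2*real k+1)^N * (2*real k+1)" by (simp only: power_add power_one_right)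
      moreover have "\<And>x X L H::real. x \<noteq> 0 \<Longrightarrow> X \<noteq> 0 \<Longrightarrow> L*(1/(X*x)) + (H/(X*x))/2 = 1/X*((L+H/2)/x)"
        by (simp add: field_simps)
      ultimately show ?thesis using x by simp
    qed
    ultimately show ?thesis by simp
  qed
  define f where "f = (\<lambda>(k,m). 1/((2*real k+1)^N*((2*real k+1)+(2*real m+1))*(2*real m+1)))"
  have "(f has_sum (ln 2 * dlambda (real (N+1)) + Ts/2)) (Sigma UNIV (\<lambda>_. UNIV))"
  proof (rule has_sum_SigmaI)
    fix k :: nat
    have "(\<lambda>m. 1/(((2*real k+1) + (2*real m+1)) * (2*real m+1))) sums ((ln 2 + harmH k/2)/(2*real k+1))"
      by (rule inner_sums)
    then have "((\<lambda>m. 1/(((2*real k+1) + (2*real m+1)) * (2*real m+1))) has_sum ((ln 2 + harmH k/2)/(2*real k+1))) UNIV"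
      by (rule sums_nonneg_imp_has_sum) simp
    from has_sum_cmult_right[OF this, of "1/(2*real k+1)^N"]
    show "((\<lambda>m. f (k,m)) has_sum (1/(2*real k+1)^N * ((ln 2 + harmH k/2)/(2*real k+1)))) UNIV"
      unfolding f_def by (simp add: mult.assoc)
  next
    show "((\<lambda>k. 1/(2*real k+1)^N * ((ln 2 + harmH k/2)/(2*real k+1))) has_sum (ln 2 * dlambda (real (N+1)) + Ts/2)) UNIV"
      by (rule sums_nonneg_imp_has_sum[OF G]) (simp add: harmH_nonneg add_nonneg_nonneg)
  next
    show "f summable_on Sigma UNIV (\<lambda>_. UNIV)"
      unfolding UNIV_Times_UNIV f_def
    proof (rule pair_summable)
      fix k m :: nat
      have "(real k+1)^2 * (real m+1)^2 \<le> (2*real k+1)^N*(((2*real k+1)+(2*real m+1))*(2*real m+1))"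
      proof (rule mult_mono)
        have "(real k+1)^2 \<le> (2*real k+1)^2" by (rule power_mono) auto
        also have "\<dots> \<le> (2*real k+1)^N" by (rule power_increasing[OF N]) auto
        finally show "(real k+1)^2 \<le> (2*real k+1)^N" .
        show "(real m+1)^2 \<le> ((2*real k+1)+(2*real m+1))*(2*real m+1)"
          unfolding power2_eq_square by (rule mult_mono) auto
      qed auto
      then show "(case (k, m) of (k, m) \<Rightarrow> 1/((2*real k+1)^N*((2*real k+1)+(2*real m+1))*(2*real m+1)))
         \<le> 1 / ((real k + 1)\<^sup>2 * (real m + 1)\<^sup>2)"
        by (auto intro!: divide_left_mono mult_pos_pos simp: mult.assoc)
    qed simp
  qed
  then show ?thesis unfolding f_def Ts_def by simp
qed



lemma has_sum_sum_fam:
  fixes f :: "'i \<Rightarrow> 'a \<Rightarrow> real"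
  assumes "finite I" "\<And>i. i \<in> I \<Longrightarrow> (f i has_sum c i) A"
  shows "((\<lambda>x. \<Sum>i\<in>I. f i x) has_sum (\<Sum>i\<in>I. c i)) A"
  using assms
proof (induction I rule: finite_induct)
  case empty then show ?case by simp
next
  case (insert j I)
  have "((\<lambda>x. f j x + (\<Sum>i\<in>I. f i x)) has_sum (c j + (\<Sum>i\<in>I. c i))) A"
    by (intro has_sum_add) (use insert in auto)
  then show ?case using insert by simp
qed

lemma key:
  fixes s' a' :: nat
  assumes ev: "even a'"
  shows "0 = (\<Sum>i<s'. real ((a'+2+i) choose (i+1)) * (Defs.sigma (s'+1-i) (a'+3+i) / 2^(s'+1-i)))
     + (\<Sum>t<Suc a'. (-1)^t * real ((s'+1+t) choose t) * (dlambda (real (s'+2+t)) * dlambda (real (a'+2-t))))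
     - real ((s'+a'+2) choose (s'+1)) * (ln 2 * dlambda (real (s'+a'+2+1)) + (\<Sum>p. harmH (p+1)/(2*real (p+1)+1)^(s'+a'+2+1))/2)"
proof -
  define Y where "Y = (\<lambda>k::nat. 2*real k+1)"
  have Ypos: "Y k > 0" for k unfolding Y_def by simp
  define F where "F = (\<lambda>(k,m). 1/(Y m^(a'+2)*(Y k+Y m)^(s'+2)) - 1/(Y k^(a'+2)*(Y k+Y m)^(s'+2)))"
  define g where "g = (\<lambda>(k,m). 1/((2*real k+1)^(a'+2)*((2*real k+1)+(2*real m+1))^(s'+2)))"
  have g: "(g has_sum (Defs.sigma (s'+2) (a'+2) / 2^(s'+2))) UNIV"
    unfolding g_def by (rule hs_T) auto
  have g': "((\<lambda>(k,m). g (m,k)) has_sum (Defs.sigma (s'+2) (a'+2) / 2^(s'+2))) UNIV"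
    using g has_sum_swap[where f=g and A=UNIV and B=UNIV] by (simp add: UNIV_Times_UNIV)
  have "((\<lambda>x. (\<lambda>(k,m). g (m,k)) x - g x) has_sum (Defs.sigma (s'+2) (a'+2) / 2^(s'+2) - sigma (s'+2) (a'+2) / 2^(s'+2))) UNIV"
  proof -
    have "((\<lambda>x. - g x) has_sum (- (Defs.sigma (s'+2) (a'+2) / 2^(s'+2)))) UNIV"
      using g by (simp add: has_sum_uminus)
    from has_sum_add[OF g' this] show ?thesis by simp
  qed
  then have G0: "((\<lambda>x. (\<lambda>(k,m). g (m,k)) x - g x) has_sum 0) UNIV" by simp
  have "(F has_sum 0) UNIV \<longleftrightarrow> ((\<lambda>x. (\<lambda>(k,m). g (m,k)) x - g x) has_sum 0) UNIV"
    by (rule has_sum_cong) (auto simp: F_def g_def Y_def add.commute)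
  with G0 have F0: "(F has_sum 0) UNIV" by simp
  define T1 where "T1 = (\<lambda>(k,m). \<Sum>i<s'. real ((a'+2+i) choose (i+1)) / (Y k^(a'+3+i)*(Y k+Y m)^(s'+1-i)))"
  define T2 where "T2 = (\<lambda>(k,m). \<Sum>t<Suc a'. (-1)^t * real ((s'+1+t) choose t) / (Y k^(s'+2+t)*Y m^(a'+2-t)))"
  define T3 where "T3 = (\<lambda>(k,m). real ((s'+a'+2) choose (s'+1)) / (Y k^(s'+a'+2)*(Y k+Y m)*Y m))"
  have FT: "F x = T1 x + T2 x - T3 x" for x
    using pointwise[of "Y (fst x)" "Y (snd x)" a' s', OF Ypos Ypos ev] unfolding F_def T1_def T2_def T3_def
    by (simp add: case_prod_unfold)
  have h1: "(T1 has_sum (\<Sum>i<s'. real ((a'+2+i) choose (i+1)) * (Defs.sigma (s'+1-i) (a'+3+i) / 2^(s'+1-i)))) UNIV"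
    unfolding T1_def case_prod_unfold
  proof (rule has_sum_sum_fam)
    fix i assume i: "i \<in> {..<s'}"
    have "((\<lambda>(k,m). 1/((2*real k+1)^(a'+3+i)*((2*real k+1)+(2*real m+1))^(s'+1-i))) has_sum (Defs.sigma (s'+1-i) (a'+3+i) / 2^(s'+1-i))) UNIV"
      by (rule hs_T) (use i in auto)
    from has_sum_cmult_right[OF this, of "real ((a'+2+i) choose (i+1))"]
    show "((\<lambda>x. real ((a'+2+i) choose (i+1)) / (Y (fst x)^(a'+3+i)*(Y (fst x)+Y (snd x))^(s'+1-i))) has_sum
          (real ((a'+2+i) choose (i+1)) * (Defs.sigma (s'+1-i) (a'+3+i) / 2^(s'+1-i)))) UNIV"
      by (simp add: Y_def case_prod_unfold)
  qed simp
  have h2: "(T2 has_sum (\<Sum>t<Suc a'. (-1)^t * real ((s'+1+t) choose t) * (dlambda (real (s'+2+t)) * dlambda (real (a'+2-t))))) UNIV"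
    unfolding T2_def case_prod_unfold
  proof (rule has_sum_sum_fam)
    fix t assume t: "t \<in> {..<Suc a'}"
    have "((\<lambda>(k,m). 1/((2*real k+1)^(s'+2+t)*(2*real m+1)^(a'+2-t))) has_sum (dlambda (real (s'+2+t)) * dlambda (real (a'+2-t)))) UNIV"
      by (rule hs_U) (use t in auto)
    from has_sum_cmult_right[OF this, of "(-1)^t * real ((s'+1+t) choose t)"]
    show "((\<lambda>x. (-1)^t * real ((s'+1+t) choose t) / (Y (fst x)^(s'+2+t)*Y (snd x)^(a'+2-t))) has_sum
          ((-1)^t * real ((s'+1+t) choose t) * (dlambda (real (s'+2+t)) * dlambda (real (a'+2-t))))) UNIV"
      by (simp add: Y_def case_prod_unfold)
  qed simp
  have h3: "(T3 has_sum (real ((s'+a'+2) choose (s'+1)) * (ln 2 * dlambda (real (s'+a'+2+1)) + (\<Sum>p. harmH (p+1)/(2*real (p+1)+1)^(s'+a'+2+1))/2))) UNIV"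
  proof -
    have "((\<lambda>(k,m). 1/((2*real k+1)^(s'+a'+2)*((2*real k+1)+(2*real m+1))*(2*real m+1))) has_sum
     (ln 2 * dlambda (real (s'+a'+2+1)) + (\<Sum>p. harmH (p+1)/(2*real (p+1)+1)^(s'+a'+2+1))/2)) UNIV"
      by (rule hs_W) simp
    from has_sum_cmult_right[OF this, of "real ((s'+a'+2) choose (s'+1))"]
    show ?thesis unfolding T3_def by (simp add: Y_def case_prod_unfold)
  qed
  have "(F has_sum (\<Sum>i<s'. real ((a'+2+i) choose (i+1)) * (Defs.sigma (s'+1-i) (a'+3+i) / 2^(s'+1-i)))
     + (\<Sum>t<Suc a'. (-1)^t * real ((s'+1+t) choose t) * (dlambda (real (s'+2+t)) * dlambda (real (a'+2-t))))
     - real ((s'+a'+2) choose (s'+1)) * (ln 2 * dlambda (real (s'+a'+2+1)) + (\<Sum>p. harmH (p+1)/(2*real (p+1)+1)^(s'+a'+2+1))/2)) UNIV"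
  proof -
    have Feq: "F = (\<lambda>x. T1 x + (T2 x + - T3 x))" using FT by (auto simp: fun_eq_iff)
    have m3: "((\<lambda>x. - T3 x) has_sum (- (real ((s'+a'+2) choose (s'+1)) * (ln 2 * dlambda (real (s'+a'+2+1)) + (\<Sum>p. harmH (p+1)/(2*real (p+1)+1)^(s'+a'+2+1))/2)))) UNIV"
      using h3 by (simp add: has_sum_uminus)
    have "((\<lambda>x. T1 x + (T2 x + - T3 x)) has_sum (\<Sum>i<s'. real ((a'+2+i) choose (i+1)) * (Defs.sigma (s'+1-i) (a'+3+i) / 2^(s'+1-i)))
     + ((\<Sum>t<Suc a'. (-1)^t * real ((s'+1+t) choose t) * (dlambda (real (s'+2+t)) * dlambda (real (a'+2-t))))
     + - (real ((s'+a'+2) choose (s'+1)) * (ln 2 * dlambda (real (s'+a'+2+1)) + (\<Sum>p. harmH (p+1)/(2*real (p+1)+1)^(s'+a'+2+1))/2)))) UNIV"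
      by (rule has_sum_add[OF h1 has_sum_add[OF h2 m3]])
    then show ?thesis unfolding Feq by (simp only: diff_conv_add_uminus add.assoc)
  qed
  from has_sum_unique[OF F0 this] show ?thesis .
qed



theorem mainTheorem11:
  fixes s r :: nat
  assumes "s \<ge> 2" and "r \<ge> 1"
  shows "(\<Sum>i=1..s-2. 2 ^ (i - 1) * real ((2*r + i - 1) choose i) * sigma (s - i) (2*r + i))
       + 2 ^ (s - 1) * (\<Sum>j=0..2*r-2. (-1) ^ j * real ((s + j - 1) choose j)
                          * dlambda (real (s + j)) * dlambda (real (2*r - j)))
       - 2 ^ (s - 2) * real ((s + 2*r - 2) choose (s - 1))
           * (\<Sum>p. harmH (p + 1) / (2 * real (p + 1) + 1) ^ (s + 2*r - 1))
       - 2 ^ (s - 1) * real ((s + 2*r - 2) choose (s - 1)) * dlambda (real (s + 2*r - 1)) * ln 2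
       = 0"
proof -
  obtain s' where s: "s = s'+2" using assms(1) by (metis add.commute le_Suc_ex)
  obtain r' where r: "r = r'+1" using assms(2) by (metis add.commute le_Suc_ex)
  define a' where "a' = 2*r'"
  have ev: "even a'" by (simp add: a'_def)
  define A where "A = (\<Sum>i<s'. real ((a'+2+i) choose (i+1)) * (Defs.sigma (s'+1-i) (a'+3+i) / 2^(s'+1-i)))"
  define B where "B = (\<Sum>t<Suc a'. (-1)^t * real ((s'+1+t) choose t) * (dlambda (real (s'+2+t)) * dlambda (real (a'+2-t))))"
  define Ts where "Ts = (\<Sum>p. harmH (p+1)/(2*real (p+1)+1)^(s'+a'+2+1))"
  define Cc where "Cc = real ((s'+a'+2) choose (s'+1))"
  have K: "0 = A + B - Cc * (ln 2 * dlambda (real (s'+a'+2+1)) + Ts/2)"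
    unfolding A_def B_def Ts_def Cc_def by (rule key[OF ev])
  have eA: "(\<Sum>i=1..s-2. 2 ^ (i - 1) * real ((2*r + i - 1) choose i) * Defs.sigma (s - i) (2*r + i)) = 2^(s'+1) * A"
  proof -
    have "{1..s-2} = {Suc 0..Suc (s'-1)} \<or> s' = 0" using s by auto
    have "(\<Sum>i=1..s-2. 2 ^ (i - 1) * real ((2*r + i - 1) choose i) * Defs.sigma (s - i) (2*r + i))
        = (\<Sum>i<s'. 2 ^ i * real ((2*r + i) choose (i+1)) * Defs.sigma (s - Suc i) (2*r + Suc i))"
      using s by (simp add: sum.atLeast1_atMost_eq del: sum.lessThan_Suc)
    also have "\<dots> = 2^(s'+1) * A" unfolding A_def sum_distrib_left
    proof (rule sum.cong[OF refl])
      fix i assume i: "i \<in> {..<s'}"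
      have p: "(2::real)^(s'+1) = 2^i * 2^(s'+1-i)" using i by (simp add: power_add[symmetric])
      show "2 ^ i * real ((2*r + i) choose (i+1)) * Defs.sigma (s - Suc i) (2*r + Suc i)
          = 2^(s'+1) * (real ((a'+2+i) choose (i+1)) * (Defs.sigma (s'+1-i) (a'+3+i) / 2^(s'+1-i)))"
      proof -
        have n: "2*r+i = a'+2+i" "s - Suc i = s'+1-i" "2*r + Suc i = a'+3+i" using s r i by (auto simp: a'_def)
        have g: "\<And>c x::real. 2^i * c * x = 2^i*2^(s'+1-i) * (c*(x/2^(s'+1-i)))" by simp
        show ?thesis unfolding n p by (rule g)
      qed
    qed
    finally show ?thesis .
  qed
  have eB: "(\<Sum>j=0..2*r-2. (-1) ^ j * real ((s + j - 1) choose j) * dlambda (real (s + j)) * dlambda (real (2*r - j))) = B"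
    unfolding B_def using s r
    by (intro sum.cong) (auto simp: a'_def atLeast0AtMost lessThan_Suc_atMost algebra_simps)
  have e1: "(s + 2*r - 2) = s'+a'+2" "s - 1 = s'+1" "s + 2*r - 1 = s'+a'+2+1" "s - 2 = s'"
    using s r by (auto simp: a'_def)
  show ?thesis
    unfolding eA eB unfolding e1 Ts_def[symmetric] Cc_def[symmetric]
    using K
  proof (simp add: algebra_simps)
    assume h: "Cc * Ts / 2 + Cc * (ln 2 * dlambda (real a' + (real s' + 3))) = A + B"
    have "A * (2 * 2 ^ s') + B * (2 * 2 ^ s') = (A + B) * (2 * 2^s')" by (simp add: algebra_simps)
    also have "\<dots> = (Cc * Ts / 2 + Cc * (ln 2 * dlambda (real a' + (real s' + 3)))) * (2 * 2^s')" by (simp add: h)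
    also have "\<dots> = Cc * (Ts * 2 ^ s') + Cc * (2 * (ln 2 * (2 ^ s' * dlambda (real a' + (real s' + 3)))))" by (simp add: algebra_simps)
    finally show "A * (2 * 2 ^ s') + B * (2 * 2 ^ s') = Cc * (Ts * 2 ^ s') + Cc * (2 * (ln 2 * (2 ^ s' * dlambda (real a' + (real s' + 3)))))" .
  qed
qed


end
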